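(* There is an absolute constant $C$ such that for every odd prime $p$ and every integer $n\ge2$, if $D$ and $X$ are independent and uniform on $\{0,1\}^{n-1}$ and $S=\sum_{i=1}^{n-1}X_i(-1)^{h(D)_i}$, then $$\mathbb{E}\big[q_p(S)\big]\le\tfrac12-\tfrac1\pi+\tfrac1{2p}+Cp^{3/2}e^{-n/(4p^2)},$$ where for an integer $k$, $q_p(k)=\sin^2(-\tfrac\pi4+\tfrac\pi pk)$ if $(k\bmod p)<p/2$ and $q_p(k)=\cos^2(-\tfrac\pi4+\tfrac\pi pk)$ otherwise.
   Context: $k\bmod p\in\{0,\dots,p-1\}$. Binary tree $B_n$: vertices $v_0,\dots,v_{n-1}$, root $v_0$; for $i\ge1$ the parent of $v_i$ is $v_{\lfloor(i-1)/2\rfloor}$ and $e_i$ joins $v_i$ to its parent. For $d\in\{0,1\}^{n-1}$, $h(d)_i=\bigoplus_{j:\,e_j\text{ on the path from }v_0\text{ to }v_i}d_j$. *)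

theory Defs
  imports "HOL-Analysis.Analysis" "HOL-Computational_Algebra.Primes"
begin

text \<open>Binary tree B_n: parent of v_i (i >= 1) is v_((i-1) div 2); edge e_i joins v_i to its parent.
  path_edges i = set of indices j such that e_j lies on the path from v_0 to v_i.\<close>
fun path_edges :: "nat \<Rightarrow> nat set" where
  "path_edges i = (if i = 0 then {} else insert i (path_edges ((i - 1) div 2)))"

definition hlab :: "(nat \<Rightarrow> nat) \<Rightarrow> nat \<Rightarrow> nat" where
  "hlab d i = (\<Sum>j\<in>path_edges i. d j) mod 2"

definition cube :: "nat \<Rightarrow> (nat \<Rightarrow> nat) set" where
  "cube n = PiE {1..n-1} (\<lambda>_. {0,1})"

definition Ssum :: "nat \<Rightarrow> (nat \<Rightarrow> nat) \<Rightarrow> (nat \<Rightarrow> nat) \<Rightarrow> int" where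
  "Ssum n d x = (\<Sum>i=1..n-1. int (x i) * (-1) ^ hlab d i)"

definition qp :: "nat \<Rightarrow> int \<Rightarrow> real" where
  "qp p k = (if real_of_int (k mod int p) < real p / 2
             then (sin (- pi/4 + pi / real p * real_of_int k))\<^sup>2
             else (cos (- pi/4 + pi / real p * real_of_int k))\<^sup>2)"

definition EqS :: "nat \<Rightarrow> nat \<Rightarrow> real" where
  "EqS p n = (\<Sum>d\<in>cube n. \<Sum>x\<in>cube n. qp p (Ssum n d x)) / real (card (cube n) * card (cube n))"

end

theory Submission imports Defs begin

declare path_edges.simps[simp del]

lemma sin_lower3: "sin x \<ge> x - x^3/6" if "x \<ge> 0" for x::real
proof -
  have "\<bar>sin x - (\<Sum>m<3. sin_coeff m * x ^ m)\<bar> \<le> inverse (fact 3) * \<bar>x\<bar> ^ 3"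
    by (rule Maclaurin_sin_bound)
  moreover have "(\<Sum>m<3. sin_coeff m * x ^ m) = x"
    by (simp add: numeral_3_eq_3 sin_coeff_def)
  ultimately show ?thesis using that by (simp add: fact_numeral abs_if split: if_splits)
qed

lemma cos_lower2: "cos x \<ge> 1 - x^2/2" for x::real
proof -
  have "cos x = 1 - 2 * (sin (x/2))^2" using cos_double_sin[of "x/2"] by simp
  moreover have "(sin (x/2))^2 \<le> (x/2)^2"
    using abs_sin_x_le_abs_x[of "x/2"] by (metis abs_ge_zero power2_abs power_mono)
  ultimately show ?thesis by (simp add: power_divide)
qed

lemma path_edges_sub: "path_edges i \<subseteq> {1..i}"
proof (induction i rule: path_edges.induct)
  case (1 i)
  show ?case
  proof (cases "i = 0")
    case True then show ?thesis by (subst path_edges.simps) simp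
  next
    case False
    then have "path_edges i = insert i (path_edges ((i - 1) div 2))" by (subst path_edges.simps) simp
    moreover have "path_edges ((i - 1) div 2) \<subseteq> {1..i}" using 1 False by fastforce
    ultimately show ?thesis using False by auto
  qed
qed

lemma hlab_upd_lt: "i < n \<Longrightarrow> hlab (d(n:=a)) i = hlab d i"
  unfolding hlab_def using path_edges_sub[of i]
  by (intro arg_cong[where f="\<lambda>x. x mod 2"] sum.cong) auto

lemma hlab_upd_eq: "n \<ge> 1 \<Longrightarrow> hlab (d(n:=a)) n = (a + (\<Sum>j\<in>path_edges ((n-1) div 2). d j)) mod 2"
proof -
  assume n: "n \<ge> 1"
  have pe: "path_edges n = insert n (path_edges ((n - 1) div 2))" using n by (subst path_edges.simps) simp
  have nn: "n \<notin> path_edges ((n - 1) div 2)" using path_edges_sub[of "(n-1) div 2"] n by auto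
  have "(\<Sum>j\<in>path_edges ((n-1) div 2). (d(n:=a)) j) = (\<Sum>j\<in>path_edges ((n-1) div 2). d j)"
    using nn by (intro sum.cong) auto
  then show ?thesis unfolding hlab_def pe using nn
    by (simp add: finite_subset[OF path_edges_sub])
qed


lemma cube_Suc: "n \<ge> 1 \<Longrightarrow> cube (Suc n) = (\<lambda>(y, g). g(n := y)) ` ({0,1} \<times> cube n)"
proof -
  assume n: "n \<ge> 1"
  have "{1..Suc n - 1} = insert n {1..n-1}" using n by auto
  then show ?thesis unfolding cube_def by (simp add: PiE_insert_eq)
qed

lemma cube_inj: "n \<ge> 1 \<Longrightarrow> inj_on (\<lambda>(y, g). g(n := y)) ({0::nat,1} \<times> cube n)"
proof (rule inj_onI)
  fix u v assume u: "u \<in> {0::nat,1} \<times> cube n" and v: "v \<in> {0::nat,1} \<times> cube n"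
    and eq: "(\<lambda>(y, g). g(n := y)) u = (\<lambda>(y, g). g(n := y)) v"
  obtain y g where ug: "u = (y, g)" by (cases u)
  obtain y' g' where vg: "v = (y', g')" by (cases v)
  have g: "g \<in> cube n" and g': "g' \<in> cube n" using u v ug vg by auto
  have eq2: "g(n := y) = g'(n := y')" using eq ug vg by simp
  have nn: "n \<notin> {1..n-1}" by auto
  have "y = y'" using fun_cong[OF eq2, of n] by simp
  moreover have "g = g'"
  proof
    fix i show "g i = g' i"
    proof (cases "i = n")
      case True
      have "g i = undefined" using g nn True unfolding cube_def by (intro PiE_arb) auto
      moreover have "g' i = undefined" using g' nn True unfolding cube_def by (intro PiE_arb) auto
      ultimately show ?thesis by simp
    next
      case False then show ?thesis using fun_cong[OF eq2, of i] by simp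
    qed
  qed
  ultimately show "u = v" using ug vg by simp
qed

lemma finite_cube: "finite (cube n)"
  unfolding cube_def by (intro finite_PiE) auto

lemma card_cube: "card (cube n) = 2^(n-1)"
  unfolding cube_def by (simp add: card_PiE numeral_2_eq_2)

lemma Ssum_upd:
  assumes n: "n \<ge> 1" and d: "d \<in> cube n" and x: "x \<in> cube n"
  shows "Ssum (Suc n) (d(n:=a)) (x(n:=b)) =
     Ssum n d x + int b * (-1) ^ ((a + (\<Sum>j\<in>path_edges ((n-1) div 2). d j)) mod 2)"
proof -
  have e: "{1..Suc n - 1} = insert n {1..n-1}" using n by auto
  have "Ssum (Suc n) (d(n:=a)) (x(n:=b)) = (\<Sum>i\<in>insert n {1..n-1}. int ((x(n:=b)) i) * (-1) ^ hlab (d(n:=a)) i)"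
    unfolding Ssum_def e ..
  also have "\<dots> = int b * (-1) ^ hlab (d(n:=a)) n + (\<Sum>i\<in>{1..n-1}. int ((x(n:=b)) i) * (-1) ^ hlab (d(n:=a)) i)"
    by (subst sum.insert) auto
  also have "(\<Sum>i\<in>{1..n-1}. int ((x(n:=b)) i) * (-1) ^ hlab (d(n:=a)) i) = Ssum n d x"
    unfolding Ssum_def using hlab_upd_lt by (intro sum.cong) auto
  finally show ?thesis using hlab_upd_eq[OF n, of d a] by (metis add.commute)
qed

lemma pm_sum: "(\<Sum>a\<in>{0::nat,1}. \<Sum>b\<in>{0::nat,1}. f (s + int b * (-1) ^ ((a + c) mod 2))) = 2 * f s + f (s+1) + f (s - 1)"
  for f :: "int \<Rightarrow> real"
proof (cases "even c")
  case True
  then have "(1 + c) mod 2 = 1" "c mod 2 = 0" by presburger+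
  then show ?thesis by simp
next
  case False
  then have "(1 + c) mod 2 = 0" "c mod 2 = 1" by presburger+
  then show ?thesis by simp
qed

lemma cp: "sum h (A \<times> B) = (\<Sum>a\<in>A. \<Sum>b\<in>B. h (a,b))"
  by (simp add: sum.cartesian_product)

lemma step_lemma:
  fixes f :: "int \<Rightarrow> real"
  assumes n: "n \<ge> 1"
  shows "(\<Sum>d\<in>cube (Suc n). \<Sum>x\<in>cube (Suc n). f (Ssum (Suc n) d x)) =
         (\<Sum>d\<in>cube n. \<Sum>x\<in>cube n. 2 * f (Ssum n d x) + f (Ssum n d x + 1) + f (Ssum n d x - 1))"
proof -
  let ?u = "\<lambda>(y::nat, g::nat\<Rightarrow>nat). g(n := y)"
  let ?c = "\<lambda>d. (\<Sum>j\<in>path_edges ((n-1) div 2). d j)"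
  have fin: "finite ({0::nat,1} \<times> cube n)" using finite_cube by auto
  have "(\<Sum>d\<in>cube (Suc n). \<Sum>x\<in>cube (Suc n). f (Ssum (Suc n) d x))
      = (\<Sum>ad\<in>{0,1} \<times> cube n. \<Sum>bx\<in>{0,1} \<times> cube n. f (Ssum (Suc n) (?u ad) (?u bx)))"
  proof -
    have r: "\<And>h. (\<Sum>d\<in>?u ` ({0,1}\<times>cube n). h d) = (\<Sum>ad\<in>{0,1}\<times>cube n. h (?u ad))"
      using sum.reindex[OF cube_inj[OF n]] by (simp add: comp_def)
    show ?thesis unfolding cube_Suc[OF n] by (simp only: r)
  qed
  also have "\<dots> = (\<Sum>a\<in>{0,1}. \<Sum>d\<in>cube n. \<Sum>b\<in>{0,1}. \<Sum>x\<in>cube n. f (Ssum (Suc n) (d(n:=a)) (x(n:=b))))"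
    by (simp only: cp prod.case)
  also have "\<dots> = (\<Sum>a\<in>{0,1}. \<Sum>d\<in>cube n. \<Sum>b\<in>{0,1}. \<Sum>x\<in>cube n.
        f (Ssum n d x + int b * (-1) ^ ((a + ?c d) mod 2)))"
    using Ssum_upd[OF n] by (intro sum.cong refl) auto
  also have "\<dots> = (\<Sum>d\<in>cube n. \<Sum>a\<in>{0,1}. \<Sum>b\<in>{0,1}. \<Sum>x\<in>cube n.
        f (Ssum n d x + int b * (-1) ^ ((a + ?c d) mod 2)))"
    by (rule sum.swap)
  also have "\<dots> = (\<Sum>d\<in>cube n. \<Sum>a\<in>{0,1}. \<Sum>x\<in>cube n. \<Sum>b\<in>{0,1}.
        f (Ssum n d x + int b * (-1) ^ ((a + ?c d) mod 2)))"
    by (rule sum.cong[OF refl], rule sum.cong[OF refl], rule sum.swap)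
  also have "\<dots> = (\<Sum>d\<in>cube n. \<Sum>x\<in>cube n. \<Sum>a\<in>{0,1}. \<Sum>b\<in>{0,1}.
        f (Ssum n d x + int b * (-1) ^ ((a + ?c d) mod 2)))"
    by (rule sum.cong[OF refl], rule sum.swap)
  also have "\<dots> = (\<Sum>d\<in>cube n. \<Sum>x\<in>cube n. 2 * f (Ssum n d x) + f (Ssum n d x + 1) + f (Ssum n d x - 1))"
    by (intro sum.cong refl pm_sum)
  finally show ?thesis .
qed


lemma cube_1: "cube 1 = {\<lambda>_. undefined}"
  unfolding cube_def by simp

lemma Ssum_1: "Ssum 1 d x = 0"
  unfolding Ssum_def by simp

lemma charf:
  fixes \<theta> :: real
  assumes "n \<ge> 1"
  shows "(\<Sum>d\<in>cube n. \<Sum>x\<in>cube n. cos (\<theta> * of_int (Ssum n d x))) = (2 + 2 * cos \<theta>)^(n-1)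
       \<and> (\<Sum>d\<in>cube n. \<Sum>x\<in>cube n. sin (\<theta> * of_int (Ssum n d x))) = 0"
  using assms
proof (induction n rule: dec_induct)
  case base
  then show ?case using cube_1 Ssum_1 by simp
next
  case (step m)
  have c: "2 * cos (\<theta> * of_int s) + cos (\<theta> * (of_int s + 1)) + cos (\<theta> * (of_int s - 1))
      = (2 + 2 * cos \<theta>) * cos (\<theta> * of_int s)" for s :: int
    by (simp add: distrib_left right_diff_distrib cos_add cos_diff algebra_simps)
  have s: "2 * sin (\<theta> * of_int s) + sin (\<theta> * (of_int s + 1)) + sin (\<theta> * (of_int s - 1))
      = (2 + 2 * cos \<theta>) * sin (\<theta> * of_int s)" for s :: int
    by (simp add: distrib_left right_diff_distrib sin_add sin_diff algebra_simps)
  have "(\<Sum>d\<in>cube (Suc m). \<Sum>x\<in>cube (Suc m). cos (\<theta> * of_int (Ssum (Suc m) d x)))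
     = (2 + 2 * cos \<theta>) * (\<Sum>d\<in>cube m. \<Sum>x\<in>cube m. cos (\<theta> * of_int (Ssum m d x)))"
    using step.hyps(1) by (simp add: step_lemma[where f="\<lambda>k. cos (\<theta> * of_int k)"] c sum_distrib_left)
  moreover have "(\<Sum>d\<in>cube (Suc m). \<Sum>x\<in>cube (Suc m). sin (\<theta> * of_int (Ssum (Suc m) d x)))
     = (2 + 2 * cos \<theta>) * (\<Sum>d\<in>cube m. \<Sum>x\<in>cube m. sin (\<theta> * of_int (Ssum m d x)))"
    using step.hyps(1) by (simp add: step_lemma[where f="\<lambda>k. sin (\<theta> * of_int k)"] s sum_distrib_left)
  ultimately show ?case using step.IH step.hyps(1)
    by (simp add: power_Suc[symmetric] del: power_Suc)
qed


lemma cis_int_2pi: "cis (2 * pi * of_int m) = 1"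
  by (simp add: complex_eq_iff cis.sel mult.assoc[symmetric])

lemma rootsum:
  fixes m :: int and p :: nat
  assumes p: "p > 0"
  shows "(\<Sum>t<p. cos (2 * pi * real t * of_int m / real p)) = (if int p dvd m then real p else 0)"
proof (cases "int p dvd m")
  case True
  then obtain j where j: "m = int p * j" by (auto simp: dvd_def)
  have "cos (2 * pi * real t * of_int m / real p) = 1" for t
  proof -
    have "2 * pi * real t * of_int m / real p = (2 * pi) * of_int (int t * j)"
      using p by (simp add: j field_simps)
    then show ?thesis by (simp only: cos_int_2pin)
  qed
  then show ?thesis using True by simp
next
  case False
  define w where "w = cis (2 * pi * of_int m / real p)"
  have w1: "w \<noteq> 1"
  proof
    assume "w = 1"
    then have "cos (2 * pi * of_int m / real p) = 1" by (simp add: w_def complex_eq_iff)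
    then obtain k :: int where "2 * pi * of_int m / real p = of_int k * 2 * pi"
      by (auto simp: cos_one_2pi_int)
    then have "real_of_int m = real_of_int (k * int p)" using p by (simp add: field_simps)
    then have "m = k * int p" by (simp only: of_int_eq_iff)
    then show False using False by simp
  qed
  have wp: "w ^ p = 1"
  proof -
    have "w ^ p = cis (real p * (2 * pi * of_int m / real p))" unfolding w_def by (rule Complex.DeMoivre)
    also have "real p * (2 * pi * of_int m / real p) = 2 * pi * of_int m" using p by simp
    finally show ?thesis by (simp add: cis_int_2pi)
  qed
  have "(\<Sum>t<p. w ^ t) = 0"
    using w1 wp by (simp add: geometric_sum)
  then have "Re (\<Sum>t<p. w ^ t) = 0" by simp
  moreover have "Re (\<Sum>t<p. w ^ t) = (\<Sum>t<p. cos (2 * pi * real t * of_int m / real p))"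
    by (simp add: w_def Re_sum Complex.DeMoivre mult_ac)
  ultimately show ?thesis using False by simp
qed

lemma qp_alt:
  "qp p k = (if real_of_int (k mod int p) < real p / 2
             then (1 - sin (2 * pi * of_int k / real p)) / 2
             else (1 + sin (2 * pi * of_int k / real p)) / 2)"
proof -
  define z where "z = pi / real p * real_of_int k"
  have c: "cos (2 * (- pi/4 + z)) = sin (2 * pi * of_int k / real p)"
  proof -
    have "2 * (- pi/4 + z) = 2 * pi * of_int k / real p - pi/2" by (simp add: z_def field_simps)
    then show ?thesis by (simp add: cos_diff)
  qed
  have s2: "(sin (- pi/4 + z))\<^sup>2 = (1 - cos (2 * (- pi/4 + z))) / 2"
    using cos_double_sin[of "- pi/4 + z"] by simp
  have c2: "(cos (- pi/4 + z))\<^sup>2 = (1 + cos (2 * (- pi/4 + z))) / 2"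
    using cos_double_cos[of "- pi/4 + z"] by simp
  show ?thesis unfolding qp_def z_def[symmetric] s2 c2 c ..
qed

lemma sin_period_mod:
  assumes p: "p > 0"
  shows "sin (2 * pi * of_int k / real p) = sin (2 * pi * of_int (k mod int p) / real p)"
proof -
  have k: "real_of_int k = real p * of_int (k div int p) + of_int (k mod int p)"
    by (metis div_mult_mod_eq mult.commute of_int_add of_int_mult of_int_of_nat_eq)
  have "2 * pi * of_int k / real p = 2 * pi * of_int (k mod int p) / real p + 2 * pi * of_int (k div int p)"
    using p by (simp add: k field_simps)
  then show ?thesis by (simp add: sin_add)
qed

lemma qp_mod: "p > 0 \<Longrightarrow> qp p k = qp p (k mod int p)"
  unfolding qp_alt using sin_period_mod[of p k] by simp

lemma qp_decomp:
  assumes p: "p > 0"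
  shows "qp p k = (\<Sum>r<p. qp p (int r) * (\<Sum>t<p. cos (2 * pi * real t * of_int (k - int r) / real p))) / real p"
proof -
  define r0 where "r0 = nat (k mod int p)"
  have r0p: "r0 < p" using p unfolding r0_def by (simp add: nat_less_iff)
  have r0e: "int r0 = k mod int p" using p unfolding r0_def by simp
  have iff: "int p dvd k - int r \<longleftrightarrow> r = r0" if "r < p" for r
  proof -
    have "int p dvd k - int r \<longleftrightarrow> k mod int p = int r mod int p"
      by (simp add: mod_eq_dvd_iff)
    also have "int r mod int p = int r" using that by simp
    finally show ?thesis using r0e by auto
  qed
  have "(\<Sum>r<p. qp p (int r) * (\<Sum>t<p. cos (2 * pi * real t * of_int (k - int r) / real p)))
      = (\<Sum>r<p. if r = r0 then qp p (int r) * real p else 0)"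
  proof (intro sum.cong refl)
    fix r assume "r \<in> {..<p}"
    then have rp: "r < p" by simp
    show "qp p (int r) * (\<Sum>t<p. cos (2 * pi * real t * of_int (k - int r) / real p))
        = (if r = r0 then qp p (int r) * real p else 0)"
      using rootsum[OF p, of "k - int r"] iff[OF rp] by simp
  qed
  also have "\<dots> = qp p (int r0) * real p" using r0p by simp
  also have "qp p (int r0) = qp p k" using qp_mod[OF p, of k] r0e by simp
  finally show ?thesis using p by simp
qed


lemma tele: "2 * sin h * (\<Sum>r\<le>k. sin (2 * real r * h)) = cos h - cos ((2 * real k + 1) * h)"
proof (induction k)
  case 0 then show ?case by simp
next
  case (Suc k)
  have ps: "2 * sin h * sin (2 * real (Suc k) * h) = cos ((2 * real k + 1) * h) - cos ((2 * real (Suc k) + 1) * h)"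
  proof -
    have a: "(2 * real k + 1) * h = 2 * real (Suc k) * h - h" by (simp add: algebra_simps)
    have b: "(2 * real (Suc k) + 1) * h = 2 * real (Suc k) * h + h" by (simp add: algebra_simps)
    show ?thesis unfolding a b by (simp add: cos_diff cos_add)
  qed
  show ?case using Suc.IH ps by (simp add: distrib_left)
qed

lemma main_term:
  fixes p :: nat
  assumes podd: "odd p" and p3: "p \<ge> 3"
  shows "(\<Sum>r<p. qp p (int r)) / real p \<le> 1/2 - 1/pi + 1/(2 * real p)"
proof -
  define m where "m = (p - 1) div 2"
  have pm: "p = 2 * m + 1" using podd unfolding m_def by presburger
  have p0: "p > 0" using p3 by simp
  define g where "g r = sin (2 * pi * real r / real p)" for r :: nat
  define T where "T = (\<Sum>r\<le>m. g r)"
  have q1: "qp p (int r) = (1 - g r) / 2" if "r \<le> m" for r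
  proof -
    have "r < p" using that pm by simp
    then have "int r mod int p = int r" by simp
    moreover have "real r < real p / 2" using that pm by simp
    ultimately show ?thesis by (simp add: qp_alt g_def)
  qed
  have q2: "qp p (int r) = (1 + g r) / 2" if "m < r" "r < p" for r
  proof -
    have "int r mod int p = int r" using that by simp
    moreover have "\<not> real r < real p / 2" using that pm by simp
    ultimately show ?thesis by (simp add: qp_alt g_def)
  qed
  have split: "{..<p} = {..m} \<union> {m+1..<p}" using pm by auto
  have sum1: "(\<Sum>r\<le>m. qp p (int r)) = real (m+1) / 2 - T / 2"
  proof -
    have "(\<Sum>r\<le>m. qp p (int r)) = (\<Sum>r\<le>m. (1 - g r) / 2)"
      using q1 by (intro sum.cong) auto
    also have "\<dots> = real (card {..m}) / 2 - (\<Sum>r\<le>m. g r) / 2"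
      by (simp add: sum_subtractf sum_divide_distrib[symmetric] diff_divide_distrib)
    finally show ?thesis by (simp add: T_def)
  qed
  have gneg: "g (p - s) = - g s" if "s \<le> p" for s
  proof -
    have "2 * pi * real (p - s) / real p = - (2 * pi * real s / real p) + 2 * pi"
      using that p0 by (simp add: of_nat_diff field_simps)
    then show ?thesis unfolding g_def by simp
  qed
  have reidx: "(\<Sum>r\<in>{m+1..<p}. g r) = (\<Sum>s\<in>{1..m}. g (p - s))"
    by (rule sum.reindex_bij_witness[where i="\<lambda>r. p - r" and j="\<lambda>s. p - s"]) (use pm in auto)
  have g0: "g 0 = 0" by (simp add: g_def)
  have T1: "(\<Sum>s\<in>{1..m}. g s) = T"
  proof -
    have "{..m} = insert 0 {1..m}" by auto
    then show ?thesis unfolding T_def using g0 by simp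
  qed
  have sum2: "(\<Sum>r\<in>{m+1..<p}. qp p (int r)) = real m / 2 - T / 2"
  proof -
    have "(\<Sum>r\<in>{m+1..<p}. qp p (int r)) = (\<Sum>r\<in>{m+1..<p}. (1 + g r) / 2)"
      using q2 by (intro sum.cong) auto
    also have "\<dots> = real (card {m+1..<p}) / 2 + (\<Sum>r\<in>{m+1..<p}. g r) / 2"
      by (simp add: sum.distrib sum_divide_distrib[symmetric] add_divide_distrib)
    also have "(\<Sum>r\<in>{m+1..<p}. g r) = - T"
    proof -
      have "(\<Sum>s\<in>{1..m}. g (p - s)) = (\<Sum>s\<in>{1..m}. - g s)"
        using gneg pm by (intro sum.cong) auto
      then show ?thesis unfolding reidx using T1 by (simp add: sum_negf)
    qed
    also have "card {m+1..<p} = m" using pm by simp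
    finally show ?thesis by simp
  qed
  have total: "(\<Sum>r<p. qp p (int r)) = real p / 2 - T"
  proof -
    have "(\<Sum>r<p. qp p (int r)) = (\<Sum>r\<le>m. qp p (int r)) + (\<Sum>r\<in>{m+1..<p}. qp p (int r))"
      unfolding split by (rule sum.union_disjoint) auto
    then show ?thesis using sum1 sum2 pm by simp
  qed
  define h where "h = pi / real p"
  have hpos: "h > 0" using p0 by (simp add: h_def)
  have hsmall: "h \<le> pi / 3" unfolding h_def by (rule divide_left_mono) (use p3 in auto)
  have sinpos: "sin h > 0" using hpos hsmall by (intro sin_gt_zero) auto
  have sinle: "sin h \<le> h" using hpos by (intro sin_x_le_x) simp
  have Teq: "2 * sin h * T = cos h + 1"
  proof -
    have "2 * sin h * T = cos h - cos ((2 * real m + 1) * h)"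
    proof -
      have "T = (\<Sum>r\<le>m. sin (2 * real r * h))"
        unfolding T_def g_def h_def by (intro sum.cong refl) (simp add: mult_ac)
      then show ?thesis using tele[of h m] by simp
    qed
    also have "(2 * real m + 1) * h = pi" using pm p0 by (simp add: h_def add.commute)
    finally show ?thesis by simp
  qed
  have cosl: "cos h \<ge> 1 - h^2/2" by (rule cos_lower2)
  have Tpos: "T \<ge> 0"
  proof -
    have "cos h + 1 \<ge> 0" using cos_ge_minus_one[of h] by linarith
    then have "0 \<le> (2 * sin h) * T" using Teq by simp
    then show ?thesis using sinpos zero_le_mult_iff[of "2 * sin h" T] by simp
  qed
  have "2 * h * T \<ge> 2 - h^2/2"
  proof -
    have "2 * h * T \<ge> 2 * sin h * T" using sinle Tpos by (simp add: mult_right_mono)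
    then show ?thesis using Teq cosl by linarith
  qed
  then have "T \<ge> 1/h - h/4" using hpos by (simp add: field_simps power2_eq_square)
  moreover have "1/h = real p / pi" by (simp add: h_def)
  moreover have "h/4 \<le> 1/2" using hsmall pi_less_4 by simp
  ultimately have TT: "T \<ge> real p / pi - 1/2" by linarith
  have eq: "(\<Sum>r<p. qp p (int r)) / real p = 1/2 - T / real p" using total p0 by (simp add: field_simps)
  have ge: "T / real p \<ge> 1/pi - 1/(2 * real p)"
  proof -
    have "T / real p \<ge> (real p / pi - 1/2) / real p" using TT p0 by (simp add: divide_right_mono)
    also have "(real p / pi - 1/2) / real p = 1/pi - 1/(2 * real p)" using p0 by (simp add: field_simps)
    finally show ?thesis .
  qed
  show ?thesis using eq ge by linarith
qed


lemma swap4: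
  "(\<Sum>d\<in>A. \<Sum>x\<in>B. \<Sum>r\<in>C. \<Sum>t\<in>D. F d x r t) = (\<Sum>r\<in>C. \<Sum>t\<in>D. \<Sum>d\<in>A. \<Sum>x\<in>B. F d x r t)"
proof -
  have "(\<Sum>d\<in>A. \<Sum>x\<in>B. \<Sum>r\<in>C. \<Sum>t\<in>D. F d x r t) = (\<Sum>d\<in>A. \<Sum>r\<in>C. \<Sum>x\<in>B. \<Sum>t\<in>D. F d x r t)"
    by (rule sum.cong[OF refl], rule sum.swap)
  also have "\<dots> = (\<Sum>d\<in>A. \<Sum>r\<in>C. \<Sum>t\<in>D. \<Sum>x\<in>B. F d x r t)"
    by (rule sum.cong[OF refl], rule sum.cong[OF refl], rule sum.swap)
  also have "\<dots> = (\<Sum>r\<in>C. \<Sum>d\<in>A. \<Sum>t\<in>D. \<Sum>x\<in>B. F d x r t)"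
    by (rule sum.swap)
  also have "\<dots> = (\<Sum>r\<in>C. \<Sum>t\<in>D. \<Sum>d\<in>A. \<Sum>x\<in>B. F d x r t)"
    by (rule sum.cong[OF refl], rule sum.swap)
  finally show ?thesis .
qed

lemma lin: "(\<Sum>d\<in>X. \<Sum>x\<in>Y. (c::real) * (A d x * u + B d x * v))
   = c * (u * (\<Sum>d\<in>X. \<Sum>x\<in>Y. A d x) + v * (\<Sum>d\<in>X. \<Sum>x\<in>Y. B d x))"
  by (simp add: sum.distrib sum_distrib_left algebra_simps)

lemma qp_bounds: "0 \<le> qp p k \<and> qp p k \<le> 1"
  unfolding qp_def by (auto simp: abs_square_le_1)

lemma EqS_formula:
  assumes p: "p > 0" and n: "n \<ge> 1"
  shows "EqS p n = (\<Sum>r<p. \<Sum>t<p. qp p (int r) / real p * cos (2 * pi * real t / real p * real r)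
            * ((1 + cos (2 * pi * real t / real p)) / 2) ^ (n - 1))"
proof -
  define \<theta> where "\<theta> t = 2 * pi * real t / real p" for t :: nat
  have e1: "qp p k = (\<Sum>r<p. \<Sum>t<p. qp p (int r) / real p *
      (cos (\<theta> t * of_int k) * cos (\<theta> t * real r) + sin (\<theta> t * of_int k) * sin (\<theta> t * real r)))" for k
  proof -
    have cd: "cos (2 * pi * real t * of_int (k - int r) / real p)
       = cos (\<theta> t * of_int k) * cos (\<theta> t * real r) + sin (\<theta> t * of_int k) * sin (\<theta> t * real r)" for t r
    proof -
      have "2 * pi * real t * of_int (k - int r) / real p = \<theta> t * of_int k - \<theta> t * real r"
        by (simp add: \<theta>_def right_diff_distrib diff_divide_distrib)
      then show ?thesis by (simp add: cos_diff)
    qed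
    show ?thesis unfolding qp_decomp[OF p, of k] cd
      by (simp add: sum_divide_distrib sum_distrib_left mult.assoc)
  qed
  have sums: "(\<Sum>d\<in>cube n. \<Sum>x\<in>cube n. qp p (Ssum n d x))
      = (\<Sum>r<p. \<Sum>t<p. qp p (int r) / real p * cos (\<theta> t * real r) * (2 + 2 * cos (\<theta> t)) ^ (n - 1))"
  proof -
    have "(\<Sum>d\<in>cube n. \<Sum>x\<in>cube n. qp p (Ssum n d x))
      = (\<Sum>d\<in>cube n. \<Sum>x\<in>cube n. \<Sum>r<p. \<Sum>t<p. qp p (int r) / real p *
      (cos (\<theta> t * of_int (Ssum n d x)) * cos (\<theta> t * real r) + sin (\<theta> t * of_int (Ssum n d x)) * sin (\<theta> t * real r)))"
      by (intro sum.cong refl) (rule e1)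
    also have "\<dots> = (\<Sum>r<p. \<Sum>t<p. \<Sum>d\<in>cube n. \<Sum>x\<in>cube n. qp p (int r) / real p *
      (cos (\<theta> t * of_int (Ssum n d x)) * cos (\<theta> t * real r) + sin (\<theta> t * of_int (Ssum n d x)) * sin (\<theta> t * real r)))"
      by (rule swap4)
    also have "\<dots> = (\<Sum>r<p. \<Sum>t<p. qp p (int r) / real p *
       (cos (\<theta> t * real r) * (\<Sum>d\<in>cube n. \<Sum>x\<in>cube n. cos (\<theta> t * of_int (Ssum n d x)))
       + sin (\<theta> t * real r) * (\<Sum>d\<in>cube n. \<Sum>x\<in>cube n. sin (\<theta> t * of_int (Ssum n d x)))))"
      by (intro sum.cong refl) (rule lin)
    also have "\<dots> = (\<Sum>r<p. \<Sum>t<p. qp p (int r) / real p * cos (\<theta> t * real r) * (2 + 2 * cos (\<theta> t)) ^ (n - 1))"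
      using charf[OF n] by (simp add: mult.assoc)
    finally show ?thesis .
  qed
  have N: "real (card (cube n) * card (cube n)) = 4 ^ (n - 1)"
    by (simp add: card_cube power_mult_distrib[symmetric])
  have "EqS p n = (\<Sum>r<p. \<Sum>t<p. qp p (int r) / real p * cos (\<theta> t * real r) * (2 + 2 * cos (\<theta> t)) ^ (n - 1)) / 4 ^ (n - 1)"
    unfolding EqS_def sums N ..
  also have "\<dots> = (\<Sum>r<p. \<Sum>t<p. qp p (int r) / real p * cos (\<theta> t * real r) * ((1 + cos (\<theta> t)) / 2) ^ (n - 1))"
  proof -
    have "(2 + 2 * cos x) ^ (n - 1) / 4 ^ (n - 1) = ((1 + cos x) / 2) ^ (n - 1)" for x :: real
    proof -
      have "(2 + 2 * cos x) ^ (n - 1) / 4 ^ (n - 1) = ((2 + 2 * cos x) / 4) ^ (n - 1)"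
        by (simp add: power_divide)
      also have "(2 + 2 * cos x) / 4 = (1 + cos x) / 2" by simp
      finally show ?thesis .
    qed
    then show ?thesis by (simp add: sum_divide_distrib mult.assoc[symmetric] times_divide_eq_right[symmetric] del: times_divide_eq_right)
  qed
  finally show ?thesis unfolding \<theta>_def .
qed


lemma half_nonneg: "0 \<le> (1 + cos x) / 2" for x :: real
proof -
  have "0 \<le> 1 + cos x" using cos_ge_minus_one[of x] by linarith
  then show ?thesis by simp
qed

lemma cos_t_le:
  assumes p: "p > 0" and t1: "1 \<le> t" and tp: "t < p"
  shows "cos (2 * pi * real t / real p) \<le> cos (2 * pi / real p)"
proof (cases "2 * t \<le> p")
  case True
  show ?thesis
  proof (rule cos_monotone_0_pi_le)
    show "0 \<le> 2 * pi / real p" by simp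
    show "2 * pi / real p \<le> 2 * pi * real t / real p" using t1 p by (simp add: divide_right_mono)
    have "2 * pi * real t / real p = pi * (2 * real t / real p)" by simp
    also have "\<dots> \<le> pi * 1" using True p
      by (intro mult_left_mono) (simp_all add: divide_le_eq)
    finally show "2 * pi * real t / real p \<le> pi" by simp
  qed
next
  case False
  define s where "s = p - t"
  have s1: "1 \<le> s" and s2: "2 * s \<le> p" using False tp unfolding s_def by auto
  have "2 * pi * real t / real p = 2 * pi - 2 * pi * real s / real p"
    using p tp unfolding s_def by (simp add: of_nat_diff field_simps)
  then have "cos (2 * pi * real t / real p) = cos (2 * pi * real s / real p)"
    by (simp add: cos_diff)
  also have "\<dots> \<le> cos (2 * pi / real p)"
  proof (rule cos_monotone_0_pi_le)
    show "0 \<le> 2 * pi / real p" by simp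
    show "2 * pi / real p \<le> 2 * pi * real s / real p" using s1 p by (simp add: divide_right_mono)
    have "2 * pi * real s / real p = pi * (2 * real s / real p)" by simp
    also have "\<dots> \<le> pi * 1" using s2 p
      by (intro mult_left_mono) (simp_all add: divide_le_eq)
    finally show "2 * pi * real s / real p \<le> pi" by simp
  qed
  finally show ?thesis .
qed

lemma psi_bound:
  assumes p3: "p \<ge> 3" and n: "n \<ge> 2"
  shows "((1 + cos (2 * pi / real p)) / 2) ^ (n - 1) \<le> exp (- real n / (4 * (real p)\<^sup>2))"
proof -
  define h where "h = pi / real p"
  have p0: "real p > 0" using p3 by simp
  have hpos: "h > 0" using p0 by (simp add: h_def)
  have hsmall: "h \<le> pi / 3" unfolding h_def by (rule divide_left_mono) (use p3 in auto)
  have h2: "h^2 \<le> 12/10"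
  proof -
    have "h \<le> 109/100" using hsmall pi_less_4 pi_approx by (simp add: pi_approx)
    then have "h^2 \<le> (109/100)^2" using hpos by (intro power_mono) auto
    moreover have "(109/100::real)^2 \<le> 12/10" by (simp add: power2_eq_square)
    ultimately show ?thesis by linarith
  qed
  have base: "(1 + cos (2 * pi / real p)) / 2 = 1 - (sin h)^2"
  proof -
    have "2 * pi / real p = 2 * h" by (simp add: h_def)
    then show ?thesis using cos_double_sin[of h] by simp
  qed
  have sl: "sin h \<ge> h - h^3/6" using sin_lower3[of h] hpos by simp
  have "h - h^3/6 = h * (1 - h^2/6)" by (simp add: algebra_simps power2_eq_square power3_eq_cube)
  also have "h * (1 - h^2/6) \<ge> h * (8/10)" using hpos h2 by (intro mult_left_mono) auto
  finally have sl2: "sin h \<ge> h * (8/10)" using sl by linarith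
  have "(sin h)^2 \<ge> (h * (8/10))^2" using sl2 hpos by (intro power_mono) auto
  moreover have "(h * (8/10))^2 = h^2 * (64/100)" by (simp add: power_mult_distrib power2_eq_square)
  ultimately have sq: "(sin h)^2 \<ge> h^2/2" using zero_le_power2[of h] by linarith
  have b0: "0 \<le> 1 - (sin h)^2" by (simp add: abs_square_le_1)
  have b1: "1 - (sin h)^2 \<le> exp (- (h^2/2))"
    using exp_ge_add_one_self[of "- (h^2/2)"] sq by linarith
  have "((1 + cos (2 * pi / real p)) / 2) ^ (n - 1) \<le> exp (- (h^2/2)) ^ (n - 1)"
    unfolding base using b1 b0 by (rule power_mono)
  also have "\<dots> = exp (- (real (n - 1) * h^2 / 2))" by (simp add: exp_of_nat_mult[symmetric])
  also have "\<dots> \<le> exp (- real n / (4 * (real p)\<^sup>2))"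
  proof -
    have hp: "h^2 = pi^2 / (real p)^2" by (simp add: h_def power_divide)
    have "(3::real)^2 \<le> pi^2" using pi_gt3 by (intro power_mono) auto
    then have pi2: "pi^2 \<ge> 9" by simp
    have nn: "real (n - 1) \<ge> real n / 2" using n by (simp add: of_nat_diff)
    have "real n / (4 * (real p)\<^sup>2) \<le> real (n - 1) * h^2 / 2"
    proof -
      have "real n / (4 * (real p)\<^sup>2) = (real n / 4) / (real p)^2" by simp
      also have "\<dots> \<le> (real (n - 1) * pi^2 / 2) / (real p)^2"
      proof (rule divide_right_mono)
        have "real n / 4 \<le> real (n - 1) * 9 / 2" using nn by linarith
        also have "\<dots> \<le> real (n - 1) * pi^2 / 2" using pi2 by (intro divide_right_mono mult_left_mono) auto
        finally show "real n / 4 \<le> real (n - 1) * pi^2 / 2" .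
      qed simp
      also have "\<dots> = real (n - 1) * h^2 / 2" by (simp add: hp)
      finally show ?thesis .
    qed
    then show ?thesis by simp
  qed
  finally show ?thesis .
qed

theorem lemma6p6:
  shows "\<exists>C::real. \<forall>(p::nat) (n::nat). prime p \<and> odd p \<and> n \<ge> 2 \<longrightarrow>
     EqS p n \<le> 1/2 - 1/pi + 1/(2 * real p)
               + C * real p powr (3/2) * exp (- real n / (4 * (real p)\<^sup>2))"
proof (intro exI[of _ 1] allI impI)
  fix p n :: nat
  assume a: "prime p \<and> odd p \<and> n \<ge> 2"
  then have pr: "prime p" and po: "odd p" and n: "n \<ge> 2" by auto
  have p2: "p \<ge> 2" using prime_ge_2_nat[OF pr] .
  have p3: "p \<ge> 3" using p2 po by (cases "p = 2") auto
  have p0: "p > 0" using p3 by simp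
  define \<theta> where "\<theta> t = 2 * pi * real t / real p" for t :: nat
  define F where "F r t = qp p (int r) / real p * cos (\<theta> t * real r) * ((1 + cos (\<theta> t)) / 2) ^ (n - 1)" for r t
  define \<psi> where "\<psi> = ((1 + cos (2 * pi / real p)) / 2) ^ (n - 1)"
  define E where "E = exp (- real n / (4 * (real p)\<^sup>2))"
  have eq: "EqS p n = (\<Sum>r<p. \<Sum>t<p. F r t)"
    unfolding F_def \<theta>_def by (rule EqS_formula[OF p0]) (use n in simp)
  have ins: "{..<p} = insert 0 {1..<p}" using p0 by auto
  have F0: "F r 0 = qp p (int r) / real p" for r by (simp add: F_def \<theta>_def)
  have psi0: "0 \<le> \<psi>"
  proof -
    have "0 \<le> (1 + cos (2 * pi / real p)) / 2" by (rule half_nonneg)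
    then show ?thesis unfolding \<psi>_def by (rule zero_le_power)
  qed
  have Fb: "F r t \<le> \<psi> / real p" if "t \<in> {1..<p}" for r t
  proof -
    have t: "1 \<le> t" "t < p" using that by auto
    have c: "cos (\<theta> t) \<le> cos (2 * pi / real p)" using cos_t_le[OF p0 t] by (simp add: \<theta>_def)
    have ph0: "0 \<le> (1 + cos (\<theta> t)) / 2" by (rule half_nonneg)
    have ph: "((1 + cos (\<theta> t)) / 2) ^ (n - 1) \<le> \<psi>"
      unfolding \<psi>_def using ph0 c by (intro power_mono) auto
    have "F r t \<le> \<bar>F r t\<bar>" by simp
    also have "\<bar>F r t\<bar> = qp p (int r) / real p * \<bar>cos (\<theta> t * real r)\<bar> * ((1 + cos (\<theta> t)) / 2) ^ (n - 1)"
      using qp_bounds[of p "int r"] ph0 by (simp add: F_def abs_mult)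
    also have "\<dots> \<le> 1 / real p * 1 * \<psi>"
      using qp_bounds[of p "int r"] ph ph0 p0
      by (intro mult_mono divide_right_mono) auto
    finally show ?thesis by simp
  qed
  have "EqS p n = (\<Sum>r<p. F r 0) + (\<Sum>r<p. \<Sum>t\<in>{1..<p}. F r t)"
    unfolding eq ins by (simp add: sum.distrib)
  also have "(\<Sum>r<p. F r 0) = (\<Sum>r<p. qp p (int r)) / real p"
    by (simp add: F0 sum_divide_distrib)
  also have "(\<Sum>r<p. \<Sum>t\<in>{1..<p}. F r t) \<le> (\<Sum>r<p. \<Sum>t\<in>{1..<p}. \<psi> / real p)"
    using Fb by (intro sum_mono) auto
  also have "(\<Sum>r<p. \<Sum>t\<in>{1..<p}. \<psi> / real p) = real (p - 1) * \<psi>"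
    using p0 by simp
  also have "real (p - 1) * \<psi> \<le> real p * E"
  proof -
    have "\<psi> \<le> E" unfolding \<psi>_def E_def by (rule psi_bound[OF p3 n])
    then show ?thesis using psi0 by (intro mult_mono) auto
  qed
  finally have "EqS p n \<le> (\<Sum>r<p. qp p (int r)) / real p + real p * E" by simp
  moreover have "(\<Sum>r<p. qp p (int r)) / real p \<le> 1/2 - 1/pi + 1/(2 * real p)"
    by (rule main_term[OF po p3])
  moreover have "real p * E \<le> 1 * real p powr (3/2) * E"
  proof -
    have "real p = real p powr 1" using p0 by simp
    also have "\<dots> \<le> real p powr (3/2)" using p3 by (intro powr_mono) auto
    finally show ?thesis unfolding E_def by simp
  qed
  ultimately show "EqS p n \<le> 1/2 - 1/pi + 1/(2 * real p) + 1 * real p powr (3/2) * exp (- real n / (4 * (real p)\<^sup>2))"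
    unfolding E_def by linarith
qed

end
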